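(* Let $f$ be a real-valued function on pairs $(\rho,\sigma)$ with $\sigma\in\mathcal F$ and $\rho$ a density matrix on the same Hilbert space as $\sigma$, which is locally monotonic with respect to $\mathcal C_{\mathcal F}$. Then $f(\rho,\sigma)\ge f(C[\rho],C[\sigma])$ for every $C\in\mathcal C_{\mathcal F}$ (with $\sigma\in\mathcal F$ in its domain), and the same holds for $f'(\rho,\sigma):=f(\rho,\sigma)-f(\sigma,\sigma)$. Moreover, $f(\sigma,\sigma)$ is independent of $\sigma\in\mathcal F$.
   Context: $\mathcal F$ is the set of all full-rank density matrices on finite-dimensional Hilbert spaces, and $\mathcal C_{\mathcal F}$ is the set of quantum channels (between possibly different finite-dimensional Hilbert spaces) mapping full-rank states to full-rank states. $f$ is locally monotonic with respect to $\mathcal C_{\mathcal F}$ if whenever $C\in\mathcal C_{\mathcal F}$ acts on $\mathcal H_1\otimes\mathcal H_2$ with output space $\mathcal H'_1\otimes\mathcal H'_2$, $\sigma_1\otimes\sigma_2\in\mathcal F$ and $C[\sigma_1\otimes\sigma_2]=\sigma'_1\otimes\sigma'_2\in\mathcal F$, then for all density matrices $\rho_i$ on $\mathcal H_i$: $f(\rho_1,\sigma_1)+f(\rho_2,\sigma_2)\ge f(\rho'_1,\sigma'_1)+f(\rho'_2,\sigma'_2)$, with $\rho'_1=\mathrm{Tr}_2[C(\rho_1\otimes\rho_2)]$, $\rho'_2=\mathrm{Tr}_1[C(\rho_1\otimes\rho_2)]$. *)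

theory Defs
  imports Complex_Main "Jordan_Normal_Form.Determinant"
begin

text \<open>A d-dimensional Hilbert space is identified with C^d; operators are complex d x d matrices.
  A bipartite space H1 (x) H2 with dims d1, d2 is C^(d1*d2) with the Kronecker ordering
  (index i of the product corresponds to (i div d2, i mod d2)).\<close>

definition mtrace :: "complex mat \<Rightarrow> complex" where
  "mtrace A = (\<Sum>i<dim_row A. A $$ (i, i))"

definition dagger :: "complex mat \<Rightarrow> complex mat" where
  "dagger A = mat (dim_col A) (dim_row A) (\<lambda>(i, j). cnj (A $$ (j, i)))"

definition psd :: "nat \<Rightarrow> complex mat \<Rightarrow> bool" where
  "psd d A \<longleftrightarrow> A \<in> carrier_mat d d \<and> dagger A = A \<and>
     (\<forall>v :: complex vec. dim_vec v = d \<longrightarrow> 0 \<le> Re (conjugate v \<bullet> (A *\<^sub>v v)))"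

definition density :: "nat \<Rightarrow> complex mat \<Rightarrow> bool" where
  "density d \<rho> \<longleftrightarrow> psd d \<rho> \<and> mtrace \<rho> = 1"

text \<open>Full-rank density matrices on C^d (the set F restricted to dimension d).\<close>
definition fullrank_state :: "nat \<Rightarrow> complex mat \<Rightarrow> bool" where
  "fullrank_state d \<sigma> \<longleftrightarrow> density d \<sigma> \<and> det \<sigma> \<noteq> 0"

definition kron :: "complex mat \<Rightarrow> complex mat \<Rightarrow> complex mat" where
  "kron A B = mat (dim_row A * dim_row B) (dim_col A * dim_col B)
     (\<lambda>(i, j). A $$ (i div dim_row B, j div dim_col B) * B $$ (i mod dim_row B, j mod dim_col B))"

definition ptrace2 :: "nat \<Rightarrow> nat \<Rightarrow> complex mat \<Rightarrow> complex mat" where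
  "ptrace2 d1 d2 X = mat d1 d1 (\<lambda>(i, j). \<Sum>k<d2. X $$ (i * d2 + k, j * d2 + k))"

definition ptrace1 :: "nat \<Rightarrow> nat \<Rightarrow> complex mat \<Rightarrow> complex mat" where
  "ptrace1 d1 d2 X = mat d2 d2 (\<lambda>(i, j). \<Sum>k<d1. X $$ (k * d2 + i, k * d2 + j))"

text \<open>id_k (x) C applied to a (k*n) x (k*n) matrix, for a map C from n x n to m x m matrices.\<close>
definition ampl :: "nat \<Rightarrow> nat \<Rightarrow> nat \<Rightarrow> (complex mat \<Rightarrow> complex mat) \<Rightarrow> complex mat \<Rightarrow> complex mat" where
  "ampl k n m C X = mat (k * m) (k * m) (\<lambda>(i, j).
      C (mat n n (\<lambda>(p, q). X $$ ((i div m) * n + p, (j div m) * n + q))) $$ (i mod m, j mod m))"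

definition channel :: "nat \<Rightarrow> nat \<Rightarrow> (complex mat \<Rightarrow> complex mat) \<Rightarrow> bool" where
  "channel n m C \<longleftrightarrow>
     (\<forall>X \<in> carrier_mat n n. C X \<in> carrier_mat m m) \<and>
     (\<forall>X \<in> carrier_mat n n. \<forall>Y \<in> carrier_mat n n. \<forall>a b :: complex.
         C (a \<cdot>\<^sub>m X + b \<cdot>\<^sub>m Y) = a \<cdot>\<^sub>m C X + b \<cdot>\<^sub>m C Y) \<and>
     (\<forall>X \<in> carrier_mat n n. mtrace (C X) = mtrace X) \<and>
     (\<forall>k X. psd (k * n) X \<longrightarrow> psd (k * m) (ampl k n m C X))"

definition channel_F :: "nat \<Rightarrow> nat \<Rightarrow> (complex mat \<Rightarrow> complex mat) \<Rightarrow> bool" where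
  "channel_F n m C \<longleftrightarrow> channel n m C \<and>
     (\<forall>\<sigma>. fullrank_state n \<sigma> \<longrightarrow> fullrank_state m (C \<sigma>))"

text \<open>Local monotonicity of f with respect to C_F. f is only meaningful on pairs
  (rho, sigma) with sigma full rank and rho a density matrix of the same dimension.\<close>
definition locally_monotonic :: "(complex mat \<Rightarrow> complex mat \<Rightarrow> real) \<Rightarrow> bool" where
  "locally_monotonic f \<longleftrightarrow>
     (\<forall>n1 n2 m1 m2 C \<sigma>1 \<sigma>2 \<sigma>1' \<sigma>2'.
        channel_F (n1 * n2) (m1 * m2) C \<and>
        fullrank_state n1 \<sigma>1 \<and> fullrank_state n2 \<sigma>2 \<and>
        fullrank_state m1 \<sigma>1' \<and> fullrank_state m2 \<sigma>2' \<and>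
        fullrank_state (n1 * n2) (kron \<sigma>1 \<sigma>2) \<and>
        C (kron \<sigma>1 \<sigma>2) = kron \<sigma>1' \<sigma>2' \<and>
        fullrank_state (m1 * m2) (kron \<sigma>1' \<sigma>2') \<longrightarrow>
        (\<forall>\<rho>1 \<rho>2. density n1 \<rho>1 \<and> density n2 \<rho>2 \<longrightarrow>
           f \<rho>1 \<sigma>1 + f \<rho>2 \<sigma>2 \<ge>
           f (ptrace2 m1 m2 (C (kron \<rho>1 \<rho>2))) \<sigma>1' +
           f (ptrace1 m1 m2 (C (kron \<rho>1 \<rho>2))) \<sigma>2'))"

end

theory Submission
  imports Defs
begin


definition SQ :: "nat \<Rightarrow> (nat \<Rightarrow> nat \<Rightarrow> complex) \<Rightarrow> (nat \<Rightarrow> complex) \<Rightarrow> complex" where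
  "SQ k X c = (\<Sum>a<k. \<Sum>b<k. cnj (c a) * X a b * c b)"

lemma sum_if_const: "(\<Sum>b\<in>A. if P then f b else 0) = (if P then sum f A else (0::'a::comm_monoid_add))"
  by simp

lemma if_conj_zero: "(if P \<and> Q then x else 0) = (if P then (if Q then x else 0) else (0::'a::zero))"
  by simp

lemma SQ_expand:
  assumes "j < k"
  shows "SQ k X (\<lambda>i. c i + (if i = j then t else 0)) =
    SQ k X c + cnj t * (\<Sum>b<k. X j b * c b) + t * (\<Sum>a<k. cnj (c a) * X a j) + cnj t * t * X j j"
proof -
  have "SQ k X (\<lambda>i. c i + (if i = j then t else 0)) =
     (\<Sum>a<k. \<Sum>b<k. cnj (c a) * X a b * c b + (if a = j then cnj t * X j b * c b else 0)
        + (if b = j then cnj (c a) * X a j * t else 0) + (if a = j \<and> b = j then cnj t * t * X j j else 0))"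
    unfolding SQ_def by (intro sum.cong refl) (auto simp: algebra_simps)
  also have "\<dots> = SQ k X c + cnj t * (\<Sum>b<k. X j b * c b) + t * (\<Sum>a<k. cnj (c a) * X a j) + cnj t * t * X j j"
    using assms unfolding SQ_def sum.distrib
    by (simp add: if_conj_zero sum_if_const sum.delta sum.delta' sum_distrib_left mult_ac)
  finally show ?thesis .
qed

definition psdf :: "nat \<Rightarrow> (nat \<Rightarrow> nat \<Rightarrow> complex) \<Rightarrow> bool" where
  "psdf k X \<longleftrightarrow> (\<forall>a<k. \<forall>b<k. X a b = cnj (X b a)) \<and> (\<forall>c. 0 \<le> Re (SQ k X c))"

lemma SQ_zero: "SQ k X (\<lambda>_. 0) = 0"
  unfolding SQ_def by simp

lemma SQ_delta: "j < k \<Longrightarrow> SQ k X (\<lambda>i. if i = j then 1 else 0) = X j j"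
  using SQ_expand[of j k X "\<lambda>_. 0" 1] by (simp add: SQ_zero)

lemma core:
  fixes q :: "nat \<Rightarrow> nat \<Rightarrow> complex"
  assumes psdq: "\<forall>c. 0 \<le> Re (\<Sum>a<k. \<Sum>b<k. cnj (c a) * c b * q a b)"
  shows "j \<le> k \<Longrightarrow> psdf k X \<Longrightarrow> (\<forall>a<k. \<forall>b<k. (a < j \<or> b < j) \<longrightarrow> X a b = 0)
     \<Longrightarrow> 0 \<le> Re (\<Sum>a<k. \<Sum>b<k. X a b * q a b)"
proof (induction j arbitrary: X rule: inc_induct)
  case base
  then show ?case by simp
next
  case (step n X)
  have herm: "\<And>a b. a < k \<Longrightarrow> b < k \<Longrightarrow> X a b = cnj (X b a)" using step.prems(1) unfolding psdf_def by blast
  have psdX: "\<And>c. 0 \<le> Re (SQ k X c)" using step.prems(1) unfolding psdf_def by blast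
  have supp: "\<And>a b. a < k \<Longrightarrow> b < k \<Longrightarrow> a < n \<or> b < n \<Longrightarrow> X a b = 0" using step.prems(2) by auto
  have nk: "n < k" using step.hyps by simp
  define d where "d = X n n"
  have hd: "cnj d = d" using herm[OF nk nk] unfolding d_def by simp
  have Red: "0 \<le> Re d" using psdX[of "\<lambda>i. if i = n then 1 else 0"] SQ_delta[OF nk] unfolding d_def by simp
  have dreal: "d = complex_of_real (Re d)" using hd by (simp add: complex_eq_iff)
  show ?case
  proof (cases "d = 0")
    case True
    have row0: "X n b = 0" if b: "b < k" for b
    proof (rule ccontr)
      assume s0: "X n b \<noteq> 0"
      define s where "s = X n b"
      have bn: "b \<noteq> n" using s0 True d_def by auto
      define r where "r = (Re (X b b) + 1) / (2 * (Re s * Re s + Im s * Im s))"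
      have pos: "0 < Re s * Re s + Im s * Im s" using s0 unfolding s_def
        by (metis complex_eq_iff sum_squares_gt_zero_iff zero_complex.sel)
      define t where "t = - complex_of_real r * s"
      define c where "c = (\<lambda>i. if i = b then (1::complex) else 0)"
      have e1: "SQ k X c = X b b" unfolding c_def using SQ_delta[OF b] by simp
      have e2: "(\<Sum>b'<k. X n b' * c b') = s" unfolding c_def s_def using b
        by (simp add: if_distrib sum.delta' cong: if_cong)
      have "(\<Sum>a<k. cnj (c a) * X a n) = (\<Sum>a<k. if a = b then X a n else 0)"
        by (rule sum.cong) (auto simp: c_def)
      then have e3: "(\<Sum>a<k. cnj (c a) * X a n) = cnj s" unfolding s_def using b herm[OF nk b]
        by simp
      have "SQ k X (\<lambda>i. c i + (if i = n then t else 0)) = X b b + cnj t * s + t * cnj s"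
        using SQ_expand[OF nk, of X c t] e1 e2 e3 True d_def by simp
      also have "\<dots> = X b b - 2 * complex_of_real r * (cnj s * s)"
        unfolding t_def by (simp add: algebra_simps)
      finally have "Re (SQ k X (\<lambda>i. c i + (if i = n then t else 0))) = Re (X b b) - 2 * r * (Re s * Re s + Im s * Im s)"
        by simp
      also have "\<dots> = -1" unfolding r_def using pos by (simp add: field_simps)
      finally show False using psdX[of "\<lambda>i. c i + (if i = n then t else 0)"] by simp
    qed
    have col0: "X a n = 0" if "a < k" for a using herm[OF that nk] row0[OF that] by simp
    show ?thesis
    proof (rule step.IH[OF step.prems(1)], intro allI impI)
      fix a b assume ab: "a < k" "b < k" "a < Suc n \<or> b < Suc n"
      then consider "a < n \<or> b < n" | "a = n" | "b = n" by (metis less_Suc_eq)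
      then show "X a b = 0" using supp ab row0 col0 by cases auto
    qed
  next
    case False
    define X' where "X' = (\<lambda>a b. X a b - X a n * X n b / d)"
    have herm': "X' a b = cnj (X' b a)" if "a < k" "b < k" for a b
      unfolding X'_def using herm[OF that] herm[OF that(1) nk] herm[OF nk that(2)] hd
      by (simp add: mult.commute)
    have psd': "0 \<le> Re (SQ k X' c)" for c
    proof -
      define s where "s = (\<Sum>b<k. X n b * c b)"
      have cs: "(\<Sum>a<k. cnj (c a) * X a n) = cnj s"
        unfolding s_def by (auto intro!: sum.cong simp: herm[OF _ nk])
      have "SQ k X' c = SQ k X c - (\<Sum>a<k. cnj (c a) * X a n) * (\<Sum>b<k. X n b * c b) / d"
        unfolding SQ_def X'_def
        by (simp add: algebra_simps sum_subtractf sum_distrib_left sum_distrib_right sum_divide_distrib)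
      also have "\<dots> = SQ k X c - cnj s * s / d" using cs s_def by simp
      also have "\<dots> = SQ k X c + cnj (- s / d) * s + (- s / d) * cnj s + cnj (- s / d) * (- s / d) * d"
        using hd False by (simp add: field_simps)
      also have "\<dots> = SQ k X (\<lambda>i. c i + (if i = n then - s / d else 0))"
        using SQ_expand[OF nk, of X c "- s / d"] cs by (simp add: s_def[symmetric] d_def[symmetric])
      finally show ?thesis using psdX by simp
    qed
    have supp': "X' a b = 0" if ab: "a < k" "b < k" "a < Suc n \<or> b < Suc n" for a b
    proof -
      consider "a < n \<or> b < n" | "a = n" | "b = n" using ab(3) by (metis less_Suc_eq)
      then show ?thesis
      proof cases
        case 1
        then show ?thesis unfolding X'_def using supp that nk by auto
      next
        case 2
        then show ?thesis unfolding X'_def d_def using False d_def by simp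
      next
        case 3
        then show ?thesis unfolding X'_def d_def using False d_def by simp
      qed
    qed
    have psdfX': "psdf k X'" unfolding psdf_def using herm' psd' by blast
    have IH': "0 \<le> Re (\<Sum>a<k. \<Sum>b<k. X' a b * q a b)"
      by (rule step.IH[OF psdfX']) (use supp' in blast)
    have rank1: "0 \<le> Re (\<Sum>a<k. \<Sum>b<k. X a n * X n b * q a b)"
    proof -
      have "(\<Sum>a<k. \<Sum>b<k. X a n * X n b * q a b) =
            (\<Sum>a<k. \<Sum>b<k. cnj (cnj (X a n)) * cnj (X b n) * q a b)"
        by (auto intro!: sum.cong simp: herm[OF nk])
      then show ?thesis using psdq[rule_format, of "\<lambda>a. cnj (X a n)"] by simp
    qed
    have "(\<Sum>a<k. \<Sum>b<k. X a b * q a b) = (\<Sum>a<k. \<Sum>b<k. X' a b * q a b)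
        + complex_of_real (1 / Re d) * (\<Sum>a<k. \<Sum>b<k. X a n * X n b * q a b)"
      unfolding X'_def using dreal
      by (simp add: algebra_simps sum_subtractf sum_distrib_left sum.distrib)
    moreover have "0 \<le> (1 / Re d) * Re (\<Sum>a<k. \<Sum>b<k. X a n * X n b * q a b)"
      using Red rank1 by simp
    ultimately show ?thesis using IH' by simp
  qed
qed



lemma sum_lessThan_add: "(\<Sum>i<(n::nat)+m. g i) = (\<Sum>i<n. g i) + (\<Sum>i<m. g (n+i))"
  by (induction m) (simp_all add: add.assoc)

lemma sum_split: "(\<Sum>i<(k::nat)*m. g i) = (\<Sum>a<k. \<Sum>s<m. g (a*m+s))"
proof (induction k)
  case 0
  then show ?case by simp
next
  case (Suc k)
  have "(\<Sum>i<Suc k * m. g i) = (\<Sum>i<k*m + m. g i)" by (simp add: add.commute)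
  also have "\<dots> = (\<Sum>i<k*m. g i) + (\<Sum>s<m. g (k*m+s))" by (rule sum_lessThan_add)
  finally show ?case using Suc by simp
qed

lemma qf_vec:
  assumes "dim_vec v = d" "A \<in> carrier_mat d d"
  shows "conjugate v \<bullet> (A *\<^sub>v v) = (\<Sum>i<d. \<Sum>j<d. cnj (v$i) * A$$(i,j) * v$j)"
  using assms
  by (auto simp: scalar_prod_def sum_distrib_left atLeast0LessThan mult.assoc row_def intro!: sum.cong)

lemma herm_iff:
  assumes "A \<in> carrier_mat d d"
  shows "dagger A = A \<longleftrightarrow> (\<forall>i<d. \<forall>j<d. A$$(i,j) = cnj (A$$(j,i)))"
proof
  assume h: "dagger A = A"
  show "\<forall>i<d. \<forall>j<d. A$$(i,j) = cnj (A$$(j,i))"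
  proof (intro allI impI)
    fix i j assume "i < d" "j < d"
    then have "dagger A $$ (i,j) = cnj (A$$(j,i))" using assms by (simp add: dagger_def)
    then show "A$$(i,j) = cnj (A$$(j,i))" unfolding h .
  qed
next
  assume h: "\<forall>i<d. \<forall>j<d. A$$(i,j) = cnj (A$$(j,i))"
  show "dagger A = A"
  proof (rule eq_matI)
    fix i j assume ij: "i < dim_row A" "j < dim_col A"
    then have "dagger A $$ (i,j) = cnj (A$$(j,i))" using assms by (simp add: dagger_def)
    moreover have d: "i < d" "j < d" using ij assms by auto
    moreover have "A$$(i,j) = cnj (A$$(j,i))" using h d by blast
    ultimately show "dagger A $$ (i,j) = A $$ (i,j)" by simp
  qed (use assms in \<open>auto simp: dagger_def\<close>)
qed

lemma psd_iff:
  "psd d A \<longleftrightarrow> A \<in> carrier_mat d d \<and> (\<forall>i<d. \<forall>j<d. A$$(i,j) = cnj (A$$(j,i))) \<and>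
     (\<forall>c. 0 \<le> Re (SQ d (\<lambda>i j. A$$(i,j)) c))"
proof (cases "A \<in> carrier_mat d d")
  case True
  have q: "(\<forall>v :: complex vec. dim_vec v = d \<longrightarrow> 0 \<le> Re (conjugate v \<bullet> (A *\<^sub>v v)))
      \<longleftrightarrow> (\<forall>c. 0 \<le> Re (SQ d (\<lambda>i j. A$$(i,j)) c))"
  proof
    assume h: "\<forall>v :: complex vec. dim_vec v = d \<longrightarrow> 0 \<le> Re (conjugate v \<bullet> (A *\<^sub>v v))"
    show "\<forall>c. 0 \<le> Re (SQ d (\<lambda>i j. A$$(i,j)) c)"
    proof
      fix c
      have "conjugate (vec d c) \<bullet> (A *\<^sub>v vec d c) = SQ d (\<lambda>i j. A$$(i,j)) c"
        using qf_vec[of "vec d c" d A] True unfolding SQ_def by simp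
      then show "0 \<le> Re (SQ d (\<lambda>i j. A$$(i,j)) c)" using h[rule_format, of "vec d c"] by simp
    qed
  next
    assume h: "\<forall>c. 0 \<le> Re (SQ d (\<lambda>i j. A$$(i,j)) c)"
    show "\<forall>v :: complex vec. dim_vec v = d \<longrightarrow> 0 \<le> Re (conjugate v \<bullet> (A *\<^sub>v v))"
    proof (intro allI impI)
      fix v :: "complex vec" assume "dim_vec v = d"
      then have "conjugate v \<bullet> (A *\<^sub>v v) = SQ d (\<lambda>i j. A$$(i,j)) (\<lambda>i. v$i)"
        using qf_vec[of v d A] True unfolding SQ_def by simp
      then show "0 \<le> Re (conjugate v \<bullet> (A *\<^sub>v v))" using h by simp
    qed
  qed
  show ?thesis unfolding psd_def using herm_iff[OF True] q True by blast
next
  case False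
  then show ?thesis unfolding psd_def by blast
qed



lemma idx_div: "i < k * m \<Longrightarrow> i div m < (k::nat)"
  by (rule less_mult_imp_div_less)

lemma idx_mod: "i < k * m \<Longrightarrow> i mod m < (m::nat)"
  by (metis mod_less_divisor mult_0_right neq0_conv not_less_zero)

lemma divmod_simp: "s < (m::nat) \<Longrightarrow> (a*m+s) div m = a" "s < m \<Longrightarrow> (a*m+s) mod m = s"
  by auto

lemma double_split: "(\<Sum>i<k*m. \<Sum>j<k*m. G i j) = (\<Sum>a<k. \<Sum>s<m. \<Sum>b<k. \<Sum>t<(m::nat). G (a*m+s) (b*m+t))"
  by (simp add: sum_split)

lemma kron_psd:
  assumes Y: "psd k Y" and T: "psd m T"
  shows "psd (k*m) (kron Y T)"
proof -
  have Yc: "Y \<in> carrier_mat k k" and hY: "\<And>i j. i<k \<Longrightarrow> j<k \<Longrightarrow> Y$$(i,j) = cnj (Y$$(j,i))"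
    and qY: "\<And>c. 0 \<le> Re (SQ k (\<lambda>i j. Y$$(i,j)) c)"
    using Y unfolding psd_iff by blast+
  have Tc: "T \<in> carrier_mat m m" and hT: "\<And>i j. i<m \<Longrightarrow> j<m \<Longrightarrow> T$$(i,j) = cnj (T$$(j,i))"
    and qT: "\<And>c. 0 \<le> Re (SQ m (\<lambda>i j. T$$(i,j)) c)"
    using T unfolding psd_iff by blast+
  have Kc: "kron Y T \<in> carrier_mat (k*m) (k*m)" using Yc Tc by (simp add: kron_def)
  have Kidx: "kron Y T $$ (i,j) = Y$$(i div m, j div m) * T$$(i mod m, j mod m)"
    if "i < k*m" "j < k*m" for i j using that Yc Tc by (simp add: kron_def)
  have herm: "\<forall>i<k*m. \<forall>j<k*m. kron Y T $$ (i,j) = cnj (kron Y T $$ (j,i))"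
  proof (intro allI impI)
    fix i j assume ij: "i < k*m" "j < k*m"
    have "Y$$(i div m, j div m) = cnj (Y$$(j div m, i div m))" using hY idx_div ij by blast
    moreover have "T$$(i mod m, j mod m) = cnj (T$$(j mod m, i mod m))" using hT idx_mod ij by blast
    ultimately show "kron Y T $$ (i,j) = cnj (kron Y T $$ (j,i))" using Kidx ij by simp
  qed
  have quad: "0 \<le> Re (SQ (k*m) (\<lambda>i j. kron Y T $$ (i,j)) c)" for c
  proof -
    define q where "q a b = (\<Sum>s<m. \<Sum>t<m. cnj (c (a*m+s)) * T$$(s,t) * c (b*m+t))" for a b
    have "SQ (k*m) (\<lambda>i j. kron Y T $$ (i,j)) c =
          (\<Sum>i<k*m. \<Sum>j<k*m. cnj (c i) * (Y$$(i div m, j div m) * T$$(i mod m, j mod m)) * c j)"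
      unfolding SQ_def by (intro sum.cong refl) (simp add: Kidx)
    also have "\<dots> = (\<Sum>a<k. \<Sum>s<m. \<Sum>b<k. \<Sum>t<m. cnj (c (a*m+s)) * (Y$$(a,b) * T$$(s,t)) * c (b*m+t))"
      unfolding double_split by (intro sum.cong refl) (simp add: divmod_simp)
    also have "\<dots> = (\<Sum>a<k. \<Sum>b<k. \<Sum>s<m. \<Sum>t<m. cnj (c (a*m+s)) * (Y$$(a,b) * T$$(s,t)) * c (b*m+t))"
      by (rule sum.cong[OF refl], rule sum.swap)
    also have "\<dots> = (\<Sum>a<k. \<Sum>b<k. Y$$(a,b) * q a b)"
      unfolding q_def by (simp add: sum_distrib_left mult_ac)
    finally have eq: "SQ (k*m) (\<lambda>i j. kron Y T $$ (i,j)) c = (\<Sum>a<k. \<Sum>b<k. Y$$(a,b) * q a b)" .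
    have psdq: "\<forall>e. 0 \<le> Re (\<Sum>a<k. \<Sum>b<k. cnj (e a) * e b * q a b)"
    proof
      fix e
      define w where "w t = (\<Sum>b<k. e b * c (b*m+t))" for t
      have "SQ m (\<lambda>i j. T$$(i,j)) w = (\<Sum>s<m. \<Sum>t<m. \<Sum>a<k. \<Sum>b<k.
              cnj (e a) * e b * (cnj (c (a*m+s)) * T$$(s,t) * c (b*m+t)))"
        unfolding SQ_def w_def by (simp add: sum_distrib_left sum_distrib_right mult_ac)
      also have "\<dots> = (\<Sum>s<m. \<Sum>a<k. \<Sum>t<m. \<Sum>b<k.
              cnj (e a) * e b * (cnj (c (a*m+s)) * T$$(s,t) * c (b*m+t)))"
        by (rule sum.cong[OF refl], rule sum.swap)
      also have "\<dots> = (\<Sum>s<m. \<Sum>a<k. \<Sum>b<k. \<Sum>t<m.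
              cnj (e a) * e b * (cnj (c (a*m+s)) * T$$(s,t) * c (b*m+t)))"
        by (rule sum.cong[OF refl], rule sum.cong[OF refl], rule sum.swap)
      also have "\<dots> = (\<Sum>a<k. \<Sum>s<m. \<Sum>b<k. \<Sum>t<m.
              cnj (e a) * e b * (cnj (c (a*m+s)) * T$$(s,t) * c (b*m+t)))"
        by (rule sum.swap)
      also have "\<dots> = (\<Sum>a<k. \<Sum>b<k. \<Sum>s<m. \<Sum>t<m.
              cnj (e a) * e b * (cnj (c (a*m+s)) * T$$(s,t) * c (b*m+t)))"
        by (rule sum.cong[OF refl], rule sum.swap)
      also have "\<dots> = (\<Sum>a<k. \<Sum>b<k. cnj (e a) * e b * q a b)"
        unfolding q_def by (simp add: sum_distrib_left)
      finally show "0 \<le> Re (\<Sum>a<k. \<Sum>b<k. cnj (e a) * e b * q a b)" using qT[of w] by simp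
    qed
    have pY: "psdf k (\<lambda>i j. Y$$(i,j))" unfolding psdf_def using hY qY by blast
    show ?thesis unfolding eq by (rule core[OF psdq _ pY]) auto
  qed
  show ?thesis unfolding psd_iff using Kc herm quad by blast
qed



lemma idx_lt: "a < k \<Longrightarrow> p < n \<Longrightarrow> a*n+p < k*(n::nat)"
proof -
  assume "a < k" "p < n"
  then have "Suc a * n \<le> k * n" by (intro mult_le_mono1) simp
  then show ?thesis using \<open>p < n\<close> by simp
qed

lemma ptrace2_psd:
  assumes X: "psd (k*n) X"
  shows "psd k (ptrace2 k n X)"
proof -
  have Xc: "X \<in> carrier_mat (k*n) (k*n)" and hX: "\<And>i j. i<k*n \<Longrightarrow> j<k*n \<Longrightarrow> X$$(i,j) = cnj (X$$(j,i))"
    and qX: "\<And>c. 0 \<le> Re (SQ (k*n) (\<lambda>i j. X$$(i,j)) c)"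
    using X unfolding psd_iff by blast+
  define P where "P = ptrace2 k n X"
  have Pc: "P \<in> carrier_mat k k" unfolding P_def ptrace2_def by simp
  have Pidx: "P$$(a,b) = (\<Sum>p<n. X$$(a*n+p, b*n+p))" if "a < k" "b < k" for a b
    using that unfolding P_def ptrace2_def by simp
  have herm: "\<forall>a<k. \<forall>b<k. P$$(a,b) = cnj (P$$(b,a))"
  proof (intro allI impI)
    fix a b assume ab: "a < k" "b < k"
    have "X$$(a*n+p, b*n+p) = cnj (X$$(b*n+p, a*n+p))" if "p < n" for p
      using hX idx_lt[OF ab(1) that] idx_lt[OF ab(2) that] by blast
    then show "P$$(a,b) = cnj (P$$(b,a))" using Pidx ab by simp
  qed
  have quad: "0 \<le> Re (SQ k (\<lambda>i j. P$$(i,j)) c)" for c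
  proof -
    define v where "v p i = (if i mod n = p then c (i div n) else 0)" for p i
    have vp: "SQ (k*n) (\<lambda>i j. X$$(i,j)) (v p) = (\<Sum>a<k. \<Sum>b<k. cnj (c a) * X$$(a*n+p, b*n+p) * c b)"
      if p: "p < n" for p
    proof -
      have "SQ (k*n) (\<lambda>i j. X$$(i,j)) (v p) =
         (\<Sum>a<k. \<Sum>s<n. \<Sum>b<k. \<Sum>t<n. cnj (v p (a*n+s)) * X$$(a*n+s, b*n+t) * v p (b*n+t))"
        unfolding SQ_def double_split ..
      also have "\<dots> = (\<Sum>a<k. \<Sum>s<n. \<Sum>b<k. if s = p then cnj (c a) * X$$(a*n+p, b*n+p) * c b else 0)"
      proof (intro sum.cong refl)
        fix a s b assume "s \<in> {..<n}"
        then have sn: "s < n" by simp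
        have "(\<Sum>t<n. cnj (v p (a*n+s)) * X$$(a*n+s, b*n+t) * v p (b*n+t))
            = (\<Sum>t<n. if t = p then cnj (v p (a*n+s)) * X$$(a*n+s, b*n+p) * c b else 0)"
          by (intro sum.cong refl) (simp add: v_def divmod_simp)
        also have "\<dots> = cnj (v p (a*n+s)) * X$$(a*n+s, b*n+p) * c b" using p by simp
        also have "\<dots> = (if s = p then cnj (c a) * X$$(a*n+p, b*n+p) * c b else 0)"
          using sn by (simp add: v_def divmod_simp)
        finally show "(\<Sum>t<n. cnj (v p (a*n+s)) * X$$(a*n+s, b*n+t) * v p (b*n+t))
            = (if s = p then cnj (c a) * X$$(a*n+p, b*n+p) * c b else 0)" .
      qed
      also have "\<dots> = (\<Sum>a<k. \<Sum>b<k. cnj (c a) * X$$(a*n+p, b*n+p) * c b)"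
        using p by (simp add: sum_if_const)
      finally show ?thesis .
    qed
    have "SQ k (\<lambda>i j. P$$(i,j)) c = (\<Sum>a<k. \<Sum>b<k. \<Sum>p<n. cnj (c a) * X$$(a*n+p, b*n+p) * c b)"
      unfolding SQ_def by (intro sum.cong refl) (simp add: Pidx sum_distrib_left sum_distrib_right)
    also have "\<dots> = (\<Sum>a<k. \<Sum>p<n. \<Sum>b<k. cnj (c a) * X$$(a*n+p, b*n+p) * c b)"
      by (rule sum.cong[OF refl], rule sum.swap)
    also have "\<dots> = (\<Sum>p<n. \<Sum>a<k. \<Sum>b<k. cnj (c a) * X$$(a*n+p, b*n+p) * c b)"
      by (rule sum.swap)
    also have "\<dots> = (\<Sum>p<n. SQ (k*n) (\<lambda>i j. X$$(i,j)) (v p))"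
      by (intro sum.cong refl) (simp add: vp)
    finally have "Re (SQ k (\<lambda>i j. P$$(i,j)) c) = (\<Sum>p<n. Re (SQ (k*n) (\<lambda>i j. X$$(i,j)) (v p)))"
      by simp
    also have "\<dots> \<ge> 0" by (intro sum_nonneg qX)
    finally show ?thesis .
  qed
  show ?thesis unfolding P_def[symmetric] psd_iff using Pc herm quad by blast
qed



definition repl :: "complex mat \<Rightarrow> complex mat \<Rightarrow> complex mat" where
  "repl T X = mtrace X \<cdot>\<^sub>m T"

lemma mtrace_lin:
  assumes "X \<in> carrier_mat n n" "Y \<in> carrier_mat n n"
  shows "mtrace (a \<cdot>\<^sub>m X + b \<cdot>\<^sub>m Y) = a * mtrace X + b * mtrace Y"
  using assms unfolding mtrace_def by (simp add: sum.distrib sum_distrib_left)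

lemma one_smult_mat': "(1::complex) \<cdot>\<^sub>m A = A"
  by (rule eq_matI) auto

lemma mtrace_smult: "T \<in> carrier_mat m m \<Longrightarrow> mtrace (c \<cdot>\<^sub>m T) = c * mtrace T"
  unfolding mtrace_def by (auto simp: sum_distrib_left intro!: sum.cong)

lemma mtrace_mat: "mtrace (mat n n f) = (\<Sum>p<n. f (p,p))"
  unfolding mtrace_def by simp

lemma ampl_repl:
  assumes Tc: "T \<in> carrier_mat m m"
  shows "ampl k n m (repl T) X = kron (ptrace2 k n X) T"
proof (rule eq_matI)
  show "dim_row (ampl k n m (repl T) X) = dim_row (kron (ptrace2 k n X) T)"
    using Tc by (simp add: ampl_def kron_def ptrace2_def)
  show "dim_col (ampl k n m (repl T) X) = dim_col (kron (ptrace2 k n X) T)"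
    using Tc by (simp add: ampl_def kron_def ptrace2_def)
  fix i j assume "i < dim_row (kron (ptrace2 k n X) T)" "j < dim_col (kron (ptrace2 k n X) T)"
  then have ij: "i < k*m" "j < k*m" using Tc by (auto simp: kron_def ptrace2_def)
  have m: "i mod m < m" "j mod m < m" using idx_mod ij by auto
  have d: "i div m < k" "j div m < k" using idx_div ij by auto
  show "ampl k n m (repl T) X $$ (i, j) = kron (ptrace2 k n X) T $$ (i, j)"
    using ij m d Tc by (simp add: ampl_def kron_def ptrace2_def repl_def mtrace_mat)
qed

lemma repl_channel:
  assumes T: "fullrank_state m T"
  shows "channel_F n m (repl T)"
proof -
  have Tp: "psd m T" and Ttr: "mtrace T = 1" using T unfolding fullrank_state_def density_def by auto
  have Tc: "T \<in> carrier_mat m m" using Tp unfolding psd_def by auto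
  have c1: "\<forall>X \<in> carrier_mat n n. repl T X \<in> carrier_mat m m" using Tc by (simp add: repl_def)
  have c2: "\<forall>X \<in> carrier_mat n n. \<forall>Y \<in> carrier_mat n n. \<forall>a b :: complex.
         repl T (a \<cdot>\<^sub>m X + b \<cdot>\<^sub>m Y) = a \<cdot>\<^sub>m repl T X + b \<cdot>\<^sub>m repl T Y"
  proof (intro ballI allI)
    fix X Y :: "complex mat" and a b :: complex assume XY: "X \<in> carrier_mat n n" "Y \<in> carrier_mat n n"
    show "repl T (a \<cdot>\<^sub>m X + b \<cdot>\<^sub>m Y) = a \<cdot>\<^sub>m repl T X + b \<cdot>\<^sub>m repl T Y"
      unfolding repl_def mtrace_lin[OF XY]
      by (rule eq_matI) (auto simp: algebra_simps)
  qed
  have c3: "\<forall>X \<in> carrier_mat n n. mtrace (repl T X) = mtrace X"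
    by (simp add: repl_def mtrace_smult[OF Tc] Ttr)
  have c4: "\<forall>k X. psd (k * n) X \<longrightarrow> psd (k * m) (ampl k n m (repl T) X)"
    using ampl_repl[OF Tc] kron_psd ptrace2_psd Tp by simp
  have c5: "\<forall>\<sigma>. fullrank_state n \<sigma> \<longrightarrow> fullrank_state m (repl T \<sigma>)"
    using T by (simp add: repl_def fullrank_state_def density_def one_smult_mat')
  show ?thesis unfolding channel_F_def channel_def using c1 c2 c3 c4 c5 by blast
qed

lemma kron_one: "A \<in> carrier_mat d d' \<Longrightarrow> kron A (1\<^sub>m 1) = A"
  by (rule eq_matI) (auto simp: kron_def)

lemma fullrank_one: "fullrank_state 1 (1\<^sub>m 1)"
proof -
  have "psd 1 (1\<^sub>m 1)"
  proof -
    have "0 \<le> Re (SQ 1 (\<lambda>i j. (1\<^sub>m 1 :: complex mat) $$ (i,j)) c)" for c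
    proof -
      have "SQ 1 (\<lambda>i j. (1\<^sub>m 1 :: complex mat) $$ (i,j)) c = cnj (c 0) * c 0"
        unfolding SQ_def by simp
      then show ?thesis by (simp add: complex_mult_cnj)
    qed
    then show ?thesis unfolding psd_iff by simp
  qed
  moreover have "mtrace (1\<^sub>m 1) = 1" unfolding mtrace_def by simp
  ultimately show ?thesis unfolding fullrank_state_def density_def by simp
qed

lemma part1:
  assumes lm: "locally_monotonic f" and C: "channel_F n m C" and s: "fullrank_state n \<sigma>"
    and r: "density n \<rho>"
  shows "f (C \<rho>) (C \<sigma>) \<le> f \<rho> \<sigma>"
proof -
  define I where "I = (1\<^sub>m 1 :: complex mat)"
  have ch: "channel n m C" and CF: "\<And>s. fullrank_state n s \<Longrightarrow> fullrank_state m (C s)"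
    using C unfolding channel_F_def by auto
  have sc: "\<sigma> \<in> carrier_mat n n" using s unfolding fullrank_state_def density_def psd_def by auto
  have rc: "\<rho> \<in> carrier_mat n n" using r unfolding density_def psd_def by auto
  have rtr: "mtrace \<rho> = 1" using r unfolding density_def by auto
  have Crc: "C \<rho> \<in> carrier_mat m m" and Crtr: "mtrace (C \<rho>) = mtrace \<rho>"
    using ch rc unfolding channel_def by auto
  have Cs: "fullrank_state m (C \<sigma>)" using CF s .
  have Csc: "C \<sigma> \<in> carrier_mat m m" using ch sc unfolding channel_def by auto
  have I: "fullrank_state 1 I" "density 1 I" using fullrank_one unfolding I_def fullrank_state_def by auto
  have ks: "kron \<sigma> I = \<sigma>" using kron_one[OF sc] I_def by simp
  have kr: "kron \<rho> I = \<rho>" using kron_one[OF rc] I_def by simp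
  have kCs: "kron (C \<sigma>) I = C \<sigma>" using kron_one[OF Csc] I_def by simp
  have p2: "ptrace2 m 1 (C \<rho>) = C \<rho>"
    by (rule eq_matI) (use Crc in \<open>auto simp: ptrace2_def\<close>)
  have p1: "ptrace1 m 1 (C \<rho>) = I"
  proof (rule eq_matI)
    fix i j assume "i < dim_row I" "j < dim_col I"
    then have "i = 0" "j = 0" unfolding I_def by auto
    moreover have "mtrace (C \<rho>) = 1" using Crtr rtr by simp
    ultimately show "ptrace1 m 1 (C \<rho>) $$ (i, j) = I $$ (i, j)"
      using Crc unfolding I_def ptrace1_def mtrace_def by simp
  qed (auto simp: I_def ptrace1_def)
  have "f \<rho> \<sigma> + f I I \<ge> f (ptrace2 m 1 (C (kron \<rho> I))) (C \<sigma>) + f (ptrace1 m 1 (C (kron \<rho> I))) I"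
    by (rule lm[unfolded locally_monotonic_def, rule_format, of n 1 m 1 C \<sigma> I "C \<sigma>" I \<rho> I])
       (use C s I Cs ks kCs r in simp_all)
  then show ?thesis unfolding kr p2 p1 by simp
qed

theorem lemma39:
  fixes f :: "complex mat \<Rightarrow> complex mat \<Rightarrow> real"
  assumes "locally_monotonic f"
  shows "(\<forall>n m C \<rho> \<sigma>. channel_F n m C \<and> fullrank_state n \<sigma> \<and> density n \<rho> \<longrightarrow>
            f \<rho> \<sigma> \<ge> f (C \<rho>) (C \<sigma>))
       \<and> (\<forall>n m C \<rho> \<sigma>. channel_F n m C \<and> fullrank_state n \<sigma> \<and> density n \<rho> \<longrightarrow>
            f \<rho> \<sigma> - f \<sigma> \<sigma> \<ge> f (C \<rho>) (C \<sigma>) - f (C \<sigma>) (C \<sigma>))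
       \<and> (\<forall>n m \<sigma> \<tau>. fullrank_state n \<sigma> \<and> fullrank_state m \<tau> \<longrightarrow> f \<sigma> \<sigma> = f \<tau> \<tau>)"
proof -
  have P1: "\<forall>n m C \<rho> \<sigma>. channel_F n m C \<and> fullrank_state n \<sigma> \<and> density n \<rho> \<longrightarrow>
            f \<rho> \<sigma> \<ge> f (C \<rho>) (C \<sigma>)"
    using part1[OF assms] by blast
  have le: "f \<tau> \<tau> \<le> f \<sigma> \<sigma>" if s: "fullrank_state n \<sigma>" and t: "fullrank_state m \<tau>" for n m \<sigma> \<tau>
  proof -
    have ds: "density n \<sigma>" using s unfolding fullrank_state_def by auto
    have "repl \<tau> \<sigma> = \<tau>" using ds by (simp add: repl_def density_def one_smult_mat')
    then show ?thesis using part1[OF assms repl_channel[OF t] s ds] by simp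
  qed
  have P3: "\<forall>n m \<sigma> \<tau>. fullrank_state n \<sigma> \<and> fullrank_state m \<tau> \<longrightarrow> f \<sigma> \<sigma> = f \<tau> \<tau>"
    using le by (meson antisym)
  have P2: "\<forall>n m C \<rho> \<sigma>. channel_F n m C \<and> fullrank_state n \<sigma> \<and> density n \<rho> \<longrightarrow>
            f \<rho> \<sigma> - f \<sigma> \<sigma> \<ge> f (C \<rho>) (C \<sigma>) - f (C \<sigma>) (C \<sigma>)"
  proof (intro allI impI)
    fix n m C \<rho> \<sigma> assume h: "channel_F n m C \<and> fullrank_state n \<sigma> \<and> density n \<rho>"
    then have "fullrank_state m (C \<sigma>)" unfolding channel_F_def by auto
    then have "f (C \<sigma>) (C \<sigma>) = f \<sigma> \<sigma>" using P3 h by blast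
    then show "f \<rho> \<sigma> - f \<sigma> \<sigma> \<ge> f (C \<rho>) (C \<sigma>) - f (C \<sigma>) (C \<sigma>)" using P1 h by auto
  qed
  show ?thesis using P1 P2 P3 by blast
qed

end
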